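(* For all $z\geq 1$, \[S_3(z)\le \frac{1534}{42875}\cdot\frac{\log^2 z + 45.75\log z + 524.266}{z},\] where $S_3(z) = \sum_{d>z,\ (d,6)=1}\mu^2(d)\frac{\tau(d)}{\psi_3(d)\,d}$.
   Context: $\tau(d)$ is the number of divisors of $d$, $\psi_3(d)=\prod_{p\mid d,\ p>3}(p-3)$, and $\mu$ is the Möbius function. *)

theory Defs
  imports "HOL-Analysis.Analysis" "HOL-Computational_Algebra.Squarefree"
begin

definition tau :: "nat \<Rightarrow> nat" where
  "tau d = card {k. k dvd d}"

definition psi3 :: "nat \<Rightarrow> real" where
  "psi3 d = (\<Prod>p\<in>{p\<in>prime_factors d. p > 3}. real p - 3)"

definition mu :: "nat \<Rightarrow> int" where
  "mu d = (if squarefree d then (-1) ^ card (prime_factors d) else 0)"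

definition S3_term :: "real \<Rightarrow> nat \<Rightarrow> real" where
  "S3_term z d = (if real d > z \<and> coprime d 6
     then real_of_int ((mu d)^2) * real (tau d) / (psi3 d * real d) else 0)"

definition S3 :: "real \<Rightarrow> real" where
  "S3 z = (\<Sum>d. S3_term z d)"

end

theory Submission
  imports Defs
begin


lemma tele_sq:
  assumes "m \<ge> 1" "n \<ge> m"
  shows "(\<Sum>k\<in>{m..<n}. 1 / (real (2*k+1))^2) \<le> 1/(4*real m) - 1/(4*real n)"
  using assms(2)
proof (induction n)
  case 0 then show ?case using assms by simp
next
  case (Suc n)
  show ?case
  proof (cases "Suc n = m")
    case True then show ?thesis by simp
  next
    case False
    then have nm: "n \<ge> m" using Suc.prems by simp
    have n1: "real n \<ge> 1" using nm assms(1) by simp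
    have step: "1 / (real (2*n+1))^2 \<le> 1/(4*real n) - 1/(4*real (Suc n))"
    proof -
      have "1/(4*real n) - 1/(4*real (Suc n)) = 1/(4*real n*(real n+1))"
        using n1 by (simp add: field_simps)
      moreover have "1 / (real (2*n+1))^2 \<le> 1/(4*real n*(real n+1))"
      proof (rule divide_left_mono)
        show "4*real n*(real n+1) \<le> (real (2*n+1))^2" by (simp add: power2_eq_square algebra_simps)
        show "0 < (real (2*n+1))^2 * (4*real n*(real n+1))" using n1 by (intro mult_pos_pos) auto
      qed simp
      ultimately show ?thesis by simp
    qed
    have "(\<Sum>k\<in>{m..<Suc n}. 1 / (real (2*k+1))^2) = (\<Sum>k\<in>{m..<n}. 1 / (real (2*k+1))^2) + 1 / (real (2*n+1))^2"
      using nm by simp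
    also have "\<dots> \<le> 1/(4*real m) - 1/(4*real n) + (1/(4*real n) - 1/(4*real (Suc n)))"
      using Suc.IH[OF nm] step by linarith
    finally show ?thesis by simp
  qed
qed

lemma tele_sq2:
  assumes "m \<ge> 1"
  shows "(\<Sum>k\<in>{m..K}. 1 / (real (2*k+1))^2) \<le> 1/(4*real m)"
proof (cases "K + 1 \<ge> m")
  case True
  have "{m..K} = {m..<K+1}" by auto
  then have "(\<Sum>k\<in>{m..K}. 1 / (real (2*k+1))^2) \<le> 1/(4*real m) - 1/(4*real (K+1))"
    using tele_sq[OF assms True] by simp
  also have "\<dots> \<le> 1/(4*real m)" by simp
  finally show ?thesis .
next
  case False then have "{m..K} = {}" by auto
  then show ?thesis by simp
qed

lemma harm_odd:
  "(\<Sum>k\<in>{0..K}. 1 / real (2*k+1)) \<le> 1 + ln (real (2*K+1)) / 2"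
proof (induction K)
  case 0 then show ?case by simp
next
  case (Suc K)
  have pos: "0 < real (2*K+1) / real (2*K+3)" by simp
  have "ln (real (2*K+1) / real (2*K+3)) \<le> real (2*K+1) / real (2*K+3) - 1"
    by (rule ln_le_minus_one[OF pos])
  also have "\<dots> = - 2 / real (2*K+3)" by (simp add: field_simps)
  finally have "ln (real (2*K+1)) - ln (real (2*K+3)) \<le> - 2 / real (2*K+3)"
    by (simp add: ln_div)
  then have st: "1 / real (2*Suc K+1) \<le> ln (real (2*Suc K+1))/2 - ln (real (2*K+1))/2"
    by (simp add: field_simps)
  have "(\<Sum>k\<in>{0..Suc K}. 1 / real (2*k+1)) = (\<Sum>k\<in>{0..K}. 1 / real (2*k+1)) + 1 / real (2*Suc K+1)"
    by simp
  with Suc.IH st show ?case by linarith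
qed

definition xx :: "nat \<Rightarrow> real" where "xx k = 6 / (real (2*k+1) * (real (2*k+1) - 3))"

lemma prod_tele:
  assumes "K \<ge> 1"
  shows "(\<Prod>k\<in>{2..K}. 1 + xx k) \<le> 4 * (real K)^2 / (real K + 1)^2"
  using assms
proof (induction K)
  case 0 then show ?case by simp
next
  case (Suc K)
  show ?case
  proof (cases "K = 0")
    case True then show ?thesis by simp
  next
    case False
    then have K1: "K \<ge> 1" by simp
    have r: "real K \<ge> 1" using K1 by simp
    have "(\<Prod>k\<in>{2..Suc K}. 1 + xx k) = (\<Prod>k\<in>{2..K}. 1 + xx k) * (1 + xx (Suc K))"
      using K1 by (simp add: atLeastAtMostSuc_conv mult.commute)
    also have "\<dots> \<le> 4 * (real K)^2 / (real K + 1)^2 * (1 + xx (Suc K))"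
      apply (rule mult_right_mono[OF Suc.IH[OF K1]])
      unfolding xx_def using r by (simp add: field_simps)
    also have "\<dots> \<le> 4 * (real (Suc K))^2 / (real (Suc K) + 1)^2"
    proof -
      have e: "1 + xx (Suc K) = (4*real K^2 + 6* real K + 6) / ((2*real K+3) * (2*real K))"
      proof -
        have den: "real (2*Suc K+1) * (real (2*Suc K+1) - 3) = (2*real K+3)*(2*real K)"
          by (simp add: algebra_simps)
        have p: "(2*real K+3)*(2*real K) > 0" using r by simp
        have "1 + xx (Suc K) = 1 + 6 / ((2*real K+3)*(2*real K))" unfolding xx_def den by simp
        also have "\<dots> = (4*real K^2 + 6* real K + 6) / ((2*real K+3) * (2*real K))"
          using p by (simp add: field_simps power2_eq_square)
        finally show ?thesis .
      qed
      have "4 * (real K)^2 / (real K + 1)^2 * ((4*real K^2 + 6* real K + 6) / ((2*real K+3) * (2*real K)))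
           \<le> 4 * (real K + 1)^2 / (real K + 2)^2"
      proof -
        define k where "k = real K"
        have k1: "k \<ge> 1" using r k_def by simp
        have id: "4*(k+1)^2*((k+1)^2*((2*k+3)*(2*k))) - 4*k^2*(4*k^2+6*k+6)*(k+2)^2 = 4*k*(2*k^3+4*k^2+4*k+6)"
          by (simp add: power2_eq_square power3_eq_cube algebra_simps)
        have nn: "0 \<le> 4*k*(2*k^3+4*k^2+4*k+6)" using k1 by simp
        have "4*k^2*(4*k^2+6*k+6)*(k+2)^2 \<le> 4*(k+1)^2*((k+1)^2*((2*k+3)*(2*k)))"
          using id nn by linarith
        then have "4 * k^2 / (k + 1)^2 * ((4*k^2 + 6* k + 6) / ((2*k+3) * (2*k))) \<le> 4 * (k + 1)^2 / (k + 2)^2"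
          using k1 by (simp add: divide_simps)
        then show ?thesis unfolding k_def .
      qed
      then show ?thesis using e by (simp add: add.commute)
    qed
    finally show ?thesis .
  qed
qed



definition Od :: "nat \<Rightarrow> nat set" where "Od N = {b. b \<le> N \<and> odd b}"

lemma Od_finite[simp]: "finite (Od N)" unfolding Od_def by auto

lemma Od_pos: "b \<in> Od N \<Longrightarrow> b \<ge> 1" unfolding Od_def by (cases b) auto

lemma nat_floor_bounds:
  fixes r :: real assumes "r \<ge> 0"
  shows "real (nat \<lfloor>r\<rfloor>) \<le> r" "r < real (nat \<lfloor>r\<rfloor>) + 1"
proof -
  have "real (nat \<lfloor>r\<rfloor>) = of_int \<lfloor>r\<rfloor>" using assms by simp
  then show "real (nat \<lfloor>r\<rfloor>) \<le> r" "r < real (nat \<lfloor>r\<rfloor>) + 1" by linarith+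
qed

lemma odd_sub_image:
  fixes S :: "nat set"
  assumes "\<And>b. b \<in> S \<Longrightarrow> odd b \<and> b \<le> N \<and> P (b div 2)"
  shows "S \<subseteq> (\<lambda>k. 2*k+1) ` {k. k \<le> N \<and> P k}"
proof
  fix b assume b: "b \<in> S"
  then have "b = 2*(b div 2)+1" using assms by (metis odd_two_times_div_two_succ)
  moreover have "b div 2 \<le> N \<and> P (b div 2)" using assms[OF b] by auto
  ultimately show "b \<in> (\<lambda>k. 2*k+1) ` {k. k \<le> N \<and> P k}" by blast
qed

lemma sum_odd_le_image:
  fixes f :: "nat \<Rightarrow> real"
  assumes "\<And>b. b \<in> S \<Longrightarrow> odd b \<and> b \<le> N \<and> P (b div 2)"
    and "\<And>b. 0 \<le> f b"
  shows "sum f S \<le> (\<Sum>k\<in>{k. k \<le> N \<and> P k}. f (2*k+1))"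
proof -
  have "sum f S \<le> sum f ((\<lambda>k. 2*k+1) ` {k. k \<le> N \<and> P k})"
    by (rule sum_mono2) (use odd_sub_image[OF assms(1)] assms(2) in auto)
  also have "\<dots> = (\<Sum>k\<in>{k. k \<le> N \<and> P k}. f (2*k+1))"
    by (subst sum.reindex) (auto simp: inj_on_def)
  finally show ?thesis .
qed

lemma L1:
  assumes x: "x \<ge> 1"
  shows "(\<Sum>b\<in>Od N. if real b > x then 1/(real b)^2 else 0) \<le> 3/(4*x)"
proof -
  define m where "m = nat \<lfloor>(x-1)/2\<rfloor> + 1"
  have m1: "m \<ge> 1" unfolding m_def by simp
  have fb: "real (nat \<lfloor>(x-1)/2\<rfloor>) \<le> (x-1)/2" "(x-1)/2 < real (nat \<lfloor>(x-1)/2\<rfloor>) + 1"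
    using nat_floor_bounds[of "(x-1)/2"] x by auto
  have mx: "2*real m + 1 > x"
  proof -
    obtain t where t: "t = real (nat \<lfloor>(x-1)/2\<rfloor>)" by simp
    have "real m = t + 1" unfolding m_def t by simp
    moreover have "x - 1 < 2*t + 2" using fb(2) t by (simp add: field_simps)
    ultimately show ?thesis by linarith
  qed
  have key: "k \<ge> m" if "real (2*k+1) > x" for k
  proof -
    have "real k > (x-1)/2" using that by simp
    then have "real k > real (nat \<lfloor>(x-1)/2\<rfloor>)" using fb by linarith
    then have "k > nat \<lfloor>(x-1)/2\<rfloor>" by (simp only: of_nat_less_iff)
    then show ?thesis unfolding m_def by simp
  qed
  have "(\<Sum>b\<in>Od N. if real b > x then 1/(real b)^2 else 0) = (\<Sum>b\<in>{b\<in>Od N. real b > x}. 1/(real b)^2)"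
    by (simp add: sum.inter_filter)
  also have "\<dots> \<le> (\<Sum>k\<in>{k. k \<le> N \<and> m \<le> k}. 1/(real (2*k+1))^2)"
  proof (rule sum_odd_le_image)
    fix b assume b: "b \<in> {b\<in>Od N. real b > x}"
    then have ob: "odd b" "b \<le> N" unfolding Od_def by auto
    then have "b = 2*(b div 2)+1" by (metis odd_two_times_div_two_succ)
    then have "real (2*(b div 2)+1) > x" using b by (metis (mono_tags, lifting) mem_Collect_eq)
    then have "m \<le> b div 2" by (rule key)
    with ob show "odd b \<and> b \<le> N \<and> m \<le> b div 2" by simp
  qed simp
  also have "{k. k \<le> N \<and> m \<le> k} = {m..N}" by auto
  also have "(\<Sum>k\<in>{m..N}. 1/(real (2*k+1))^2) \<le> 1/(4*real m)" by (rule tele_sq2[OF m1])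
  also have "\<dots> \<le> 3/(4*x)"
  proof -
    have "x \<le> 3 * real m" using mx m1 by linarith
    then show ?thesis using x m1 by (simp add: field_simps)
  qed
  finally show ?thesis .
qed

lemma L2a: "(\<Sum>b\<in>Od N. 1/(real b)^2) \<le> 5/4"
proof -
  have "(\<Sum>b\<in>Od N. 1/(real b)^2) \<le> (\<Sum>k\<in>{k. k \<le> N \<and> True}. 1/(real (2*k+1))^2)"
    by (rule sum_odd_le_image) (auto simp: Od_def)
  also have "{k. k \<le> N \<and> True} = {0..N}" by auto
  also have "(\<Sum>k\<in>{0..N}. 1/(real (2*k+1))^2) = 1 + (\<Sum>k\<in>{1..N}. 1/(real (2*k+1))^2)"
    by (simp add: sum.atLeast_Suc_atMost)
  also have "\<dots> \<le> 1 + 1/(4*real (1::nat))" using tele_sq2[of 1 N] by simp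
  finally show ?thesis by simp
qed

lemma L2:
  "(\<Sum>b\<in>Od N. if real b > x then 1/(real b)^2 else 0) \<le> 5/4"
proof -
  have "(\<Sum>b\<in>Od N. if real b > x then 1/(real b)^2 else 0) \<le> (\<Sum>b\<in>Od N. 1/(real b)^2)"
    by (rule sum_mono) auto
  with L2a[of N] show ?thesis by linarith
qed

lemma L3:
  assumes y: "y \<ge> 1"
  shows "(\<Sum>a\<in>Od N. if real a \<le> y then 1/real a else 0) \<le> 1 + ln y / 2"
proof -
  define K where "K = nat \<lfloor>(y-1)/2\<rfloor>"
  have fb: "real (nat \<lfloor>(y-1)/2\<rfloor>) \<le> (y-1)/2" "(y-1)/2 < real (nat \<lfloor>(y-1)/2\<rfloor>) + 1"
    using nat_floor_bounds[of "(y-1)/2"] y by auto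
  have Ky: "real (2*K+1) \<le> y"
  proof -
    obtain t where t: "t = real (nat \<lfloor>(y-1)/2\<rfloor>)" by simp
    have "real (2*K+1) = 2*t + 1" unfolding K_def t by simp
    moreover have "2*t \<le> y-1" using fb(1) t by (simp add: field_simps)
    ultimately show ?thesis by linarith
  qed
  have key: "k \<le> K" if "real (2*k+1) \<le> y" for k
  proof -
    have "real k \<le> (y-1)/2" using that by simp
    then have "real k < real K + 1" using fb unfolding K_def by linarith
    then have "real k < real (K + 1)" by simp
    then show ?thesis by (simp only: of_nat_less_iff)
  qed
  have "(\<Sum>a\<in>Od N. if real a \<le> y then 1/real a else 0) = (\<Sum>a\<in>{a\<in>Od N. real a \<le> y}. 1/real a)"
    by (simp add: sum.inter_filter)
  also have "\<dots> \<le> (\<Sum>k\<in>{k. k \<le> N \<and> k \<le> K}. 1/real (2*k+1))"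
  proof (rule sum_odd_le_image)
    fix b assume b: "b \<in> {b\<in>Od N. real b \<le> y}"
    then have ob: "odd b" "b \<le> N" unfolding Od_def by auto
    then have "b = 2*(b div 2)+1" by (metis odd_two_times_div_two_succ)
    then have "real (2*(b div 2)+1) \<le> y" using b by (metis (mono_tags, lifting) mem_Collect_eq)
    then have "b div 2 \<le> K" by (rule key)
    with ob show "odd b \<and> b \<le> N \<and> b div 2 \<le> K" by simp
  qed simp
  also have "\<dots> \<le> (\<Sum>k\<in>{0..K}. 1/real (2*k+1))"
    by (rule sum_mono2) auto
  also have "\<dots> \<le> 1 + ln (real (2*K+1)) / 2" by (rule harm_odd)
  also have "\<dots> \<le> 1 + ln y / 2" using Ky by simp
  finally show ?thesis .
qed

definition TT :: "nat \<Rightarrow> real \<Rightarrow> real" where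
  "TT N y = (\<Sum>a\<in>Od N. \<Sum>b\<in>Od N. if real (a*b) > y then 1/((real a)^2 * (real b)^2) else 0)"

lemma TT_bound:
  assumes y: "y > 0"
  shows "TT N y \<le> (if y \<ge> 1 then (3/8 * ln y + 27/16) / y else 25/16)"
proof -
  have inner: "(\<Sum>b\<in>Od N. if real (a*b) > y then 1/((real a)^2 * (real b)^2) else 0)
      \<le> (if real a \<le> y then 3/(4*y) * (1/real a) else 5/4 * (if real a > y then 1/(real a)^2 else 0))"
    if a: "a \<in> Od N" for a
  proof -
    have a1: "real a \<ge> 1" using Od_pos[OF a] by simp
    have "(\<Sum>b\<in>Od N. if real (a*b) > y then 1/((real a)^2 * (real b)^2) else 0)
        = 1/(real a)^2 * (\<Sum>b\<in>Od N. if real b > y / real a then 1/(real b)^2 else 0)"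
      unfolding sum_distrib_left
    proof (rule sum.cong[OF refl])
      fix b
      have "real (a*b) > y \<longleftrightarrow> real b > y / real a" using a1
        by (simp add: pos_divide_less_eq mult.commute)
      then show "(if real (a*b) > y then 1/((real a)^2 * (real b)^2) else 0)
          = 1/(real a)^2 * (if real b > y / real a then 1/(real b)^2 else 0)" by simp
    qed
    also have "\<dots> \<le> (if real a \<le> y then 3/(4*y) * (1/real a) else 5/4 * (if real a > y then 1/(real a)^2 else 0))"
    proof (cases "real a \<le> y")
      case True
      then have "y / real a \<ge> 1" using a1 by simp
      from L1[OF this, where N=N] have "1/(real a)^2 * (\<Sum>b\<in>Od N. if real b > y / real a then 1/(real b)^2 else 0)
          \<le> 1/(real a)^2 * (3/(4*(y/real a)))" by (intro mult_left_mono) auto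
      also have "\<dots> = 3/(4*y) * (1/real a)" using a1 y by (simp add: field_simps power2_eq_square)
      finally show ?thesis using True by simp
    next
      case False
      from L2[where N=N and x="y / real a"] have "1/(real a)^2 * (\<Sum>b\<in>Od N. if real b > y / real a then 1/(real b)^2 else 0)
          \<le> 1/(real a)^2 * (5/4)" by (intro mult_left_mono) auto
      then show ?thesis using False by (simp add: mult.commute)
    qed
    finally show ?thesis .
  qed
  have "TT N y \<le> (\<Sum>a\<in>Od N. if real a \<le> y then 3/(4*y) * (1/real a) else 5/4 * (if real a > y then 1/(real a)^2 else 0))"
    unfolding TT_def by (rule sum_mono) (rule inner)
  also have "\<dots> = 3/(4*y) * (\<Sum>a\<in>Od N. if real a \<le> y then 1/real a else 0)
        + 5/4 * (\<Sum>a\<in>Od N. if real a > y then 1/(real a)^2 else 0)"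
    by (auto simp add: sum_distrib_left sum.distrib[symmetric] intro!: sum.cong)
  also have "\<dots> \<le> (if y \<ge> 1 then (3/8 * ln y + 27/16) / y else 25/16)"
  proof (cases "y \<ge> 1")
    case True
    have "3/(4*y) * (\<Sum>a\<in>Od N. if real a \<le> y then 1/real a else 0) \<le> 3/(4*y) * (1 + ln y / 2)"
      using L3[OF True, where N=N] y by (intro mult_left_mono) auto
    moreover have "5/4 * (\<Sum>a\<in>Od N. if real a > y then 1/(real a)^2 else 0) \<le> 5/4 * (3/(4*y))"
      using L1[OF True, where N=N] by simp
    moreover have "3/(4*y) * (1 + ln y / 2) + 5/4 * (3/(4*y)) = (3/8 * ln y + 27/16) / y"
      using y by (simp add: field_simps)
    ultimately show ?thesis using True by simp
  next
    case False
    have "(\<Sum>a\<in>Od N. if real a \<le> y then 1/real a else 0) = 0"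
      by (rule sum.neutral) (use False Od_pos in force)
    moreover have "5/4 * (\<Sum>a\<in>Od N. if real a > y then 1/(real a)^2 else 0) \<le> 5/4 * (5/4)"
      using L2[where N=N and x=y] by simp
    ultimately show ?thesis using False by simp
  qed
  finally show ?thesis .
qed



definition vv :: "nat \<Rightarrow> real" where
  "vv p = (if p > 3 then 6 / ((real p)^2 * (real p - 3)) else 0)"
definition ww :: "nat \<Rightarrow> real" where "ww e = (\<Prod>p\<in>prime_factors e. vv p)"
definition Es :: "nat \<Rightarrow> nat set" where "Es N = {e. e \<le> N \<and> squarefree e \<and> coprime e 6}"
definition pr3 :: "nat \<times> nat \<times> nat \<Rightarrow> nat" where "pr3 t = fst t * fst (snd t) * snd (snd t)"
definition Wz :: "real \<Rightarrow> nat \<times> nat \<times> nat \<Rightarrow> real" where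
  "Wz z t = (if real (pr3 t) > z then ww (fst t) / ((real (fst (snd t)))^2 * (real (snd (snd t)))^2) else 0)"

lemma vv_nn: "vv p \<ge> 0" unfolding vv_def by auto
lemma ww_nn: "ww e \<ge> 0" unfolding ww_def by (intro prod_nonneg) (auto intro: vv_nn)
lemma Wz_nn: "Wz z t \<ge> 0" unfolding Wz_def using ww_nn by auto

lemma Es_finite[simp]: "finite (Es N)" unfolding Es_def by auto

lemma coprime_dvd6: "coprime d (6::nat) \<Longrightarrow> e dvd d \<Longrightarrow> coprime e 6"
  by (metis coprime_mult_left_iff dvd_def)

lemma pf_big:
  assumes "coprime d (6::nat)" "p \<in> prime_factors d"
  shows "p > 3 \<and> odd p"
proof -
  have pr: "prime p" and pd: "p dvd d" using assms(2) by auto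
  have cp: "coprime p 6" using coprime_dvd6[OF assms(1) pd] .
  have "p \<noteq> 2" using cp by (intro notI) simp
  moreover have "p \<noteq> 3"
  proof
    assume "p = 3"
    then have "3 dvd gcd p 6" by simp
    then show False using cp by simp
  qed
  moreover have "\<not> 2 dvd p"
  proof
    assume "2 dvd p"
    then have "2 dvd gcd p 6" by simp
    then show False using cp by simp
  qed
  moreover have "p \<ge> 2" using pr prime_ge_2_nat by blast
  ultimately show ?thesis by auto
qed

lemma sqf_prod:
  assumes "squarefree (d::nat)"
  shows "d = (\<Prod>p\<in>prime_factors d. p)"
proof -
  have d0: "d \<noteq> 0" using assms by (cases "d = 0") auto
  have m: "\<forall>p\<in>prime_factors d. multiplicity p d = 1"
    using squarefree_factorial_semiring'[OF d0] assms by blast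
  have "d = (\<Prod>p\<in>prime_factors d. p ^ multiplicity p d)"
    using prime_factorization_nat d0 by blast
  also have "\<dots> = (\<Prod>p\<in>prime_factors d. p)" using m by (intro prod.cong) auto
  finally show ?thesis .
qed

lemma pf_prod_set:
  assumes "finite A" "\<And>p. p \<in> A \<Longrightarrow> prime (p::nat)"
  shows "prime_factors (\<Prod>p\<in>A. p) = A"
proof -
  have "0 \<notin> (\<lambda>p. p) ` A" using assms(2) by force
  then have "prime_factors (\<Prod>p\<in>A. p) = \<Union>((prime_factors \<circ> (\<lambda>p. p)) ` A)"
    using prime_factors_prod[OF assms(1)] by blast
  also have "\<dots> = A" using assms(2) by (auto simp: prime_prime_factors)
  finally show ?thesis .
qed

lemma tau_le:
  assumes "squarefree (d::nat)"
  shows "tau d \<le> 2 ^ card (prime_factors d)"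
proof -
  have d0: "d \<noteq> 0" using assms by (cases "d = 0") auto
  have "inj_on prime_factors {k. k dvd d}"
  proof (rule inj_onI)
    fix k l assume k: "k \<in> {k. k dvd d}" and l: "l \<in> {k. k dvd d}" and e: "prime_factors k = prime_factors l"
    have "squarefree k" "squarefree l" using k l assms squarefree_mono by auto
    then show "k = l" using sqf_prod e by metis
  qed
  moreover have "prime_factors ` {k. k dvd d} \<subseteq> Pow (prime_factors d)"
    using d0 dvd_prime_factors by blast
  ultimately have "card {k. k dvd d} \<le> card (Pow (prime_factors d))"
    by (intro card_inj_on_le) auto
  then show ?thesis unfolding tau_def by (simp add: card_Pow)
qed



lemma termA:
  assumes dN: "d \<le> N"
  shows "S3_term z d \<le> (\<Sum>t\<in>{t\<in>Es N \<times> Od N \<times> Od N. pr3 t = d}. Wz z t)"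
proof (cases "real d > z \<and> coprime d 6 \<and> squarefree d")
  case False
  have "S3_term z d = 0"
  proof (cases "real d > z \<and> coprime d 6")
    case True
    then have "\<not> squarefree d" using False by blast
    then show ?thesis unfolding S3_term_def mu_def by simp
  next
    case False then show ?thesis unfolding S3_term_def by auto
  qed
  then show ?thesis by (simp add: sum_nonneg Wz_nn)
next
  case True
  then have dz: "real d > z" and cp: "coprime d 6" and sq: "squarefree d" by auto
  define P where "P = prime_factors d"
  have d0: "d \<noteq> 0" using sq by (cases "d = 0") auto
  have fP: "finite P" unfolding P_def by simp
  have Pbig: "\<And>p. p \<in> P \<Longrightarrow> p > 3 \<and> odd p" unfolding P_def using pf_big[OF cp] by blast
  have Pprime: "\<And>p. p \<in> P \<Longrightarrow> prime p" unfolding P_def by auto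
  have dprod: "d = (\<Prod>p\<in>P. p)" unfolding P_def by (rule sqf_prod[OF sq])
  have mu1: "real_of_int ((mu d)^2) = 1"
  proof -
    have "((-1::int)^k)^2 = 1" for k by (simp add: power_mult[symmetric] mult.commute)
    then show ?thesis unfolding mu_def using sq by simp
  qed
  have psi: "psi3 d = (\<Prod>p\<in>P. real p - 3)"
  proof -
    have "{p\<in>prime_factors d. p > 3} = P" unfolding P_def using Pbig P_def by auto
    then show ?thesis unfolding psi3_def by simp
  qed
  have psipos: "psi3 d > 0" unfolding psi using Pbig by (intro prod_pos) (auto simp: of_nat_less_iff[symmetric])
  have rd: "real d = (\<Prod>p\<in>P. real p)" by (subst dprod) simp
  have dpos: "real d > 0" using d0 by simp
  have "S3_term z d = real (tau d) / (psi3 d * real d)"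
    unfolding S3_term_def using True mu1 by simp
  also have "\<dots> \<le> 2 ^ card P / (psi3 d * real d)"
  proof -
    have "real (tau d) \<le> real (2 ^ card P)" unfolding P_def using tau_le[OF sq] by (rule of_nat_mono)
    then have "real (tau d) \<le> 2 ^ card P" by simp
    then show ?thesis using psipos dpos by (intro divide_right_mono) auto
  qed
  also have "\<dots> = (\<Prod>p\<in>P. 2 / ((real p - 3) * real p))"
    unfolding psi rd by (simp add: prod_dividef prod.distrib)
  also have "\<dots> = (\<Prod>p\<in>P. vv p + (1/(real p)^2 + 1/(real p)^2))"
  proof (rule prod.cong[OF refl])
    fix p assume "p \<in> P"
    then have p3: "real p > 3" using Pbig by (simp add: of_nat_less_iff[symmetric])
    show "2 / ((real p - 3) * real p) = vv p + (1/(real p)^2 + 1/(real p)^2)"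
      unfolding vv_def using p3 by (simp add: field_simps power2_eq_square)
  qed
  also have "\<dots> = (\<Sum>E\<in>Pow P. (\<Prod>p\<in>E. vv p) * (\<Prod>p\<in>P-E. 1/(real p)^2 + 1/(real p)^2))"
    by (rule prod_add[OF fP])
  also have "\<dots> = (\<Sum>E\<in>Pow P. (\<Prod>p\<in>E. vv p) * (\<Sum>A\<in>Pow (P-E). (\<Prod>p\<in>A. 1/(real p)^2) * (\<Prod>p\<in>P-E-A. 1/(real p)^2)))"
  proof (rule sum.cong[OF refl])
    fix E assume "E \<in> Pow P"
    have f: "finite (P-E)" using fP by auto
    show "(\<Prod>p\<in>E. vv p) * (\<Prod>p\<in>P-E. 1/(real p)^2 + 1/(real p)^2) =
      (\<Prod>p\<in>E. vv p) * (\<Sum>A\<in>Pow (P-E). (\<Prod>p\<in>A. 1/(real p)^2) * (\<Prod>p\<in>P-E-A. 1/(real p)^2))"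
      by (rule arg_cong[where f="\<lambda>x. (\<Prod>p\<in>E. vv p) * x"]) (rule prod_add[OF f])
  qed
  also have "\<dots> = (\<Sum>(E,A)\<in>Sigma (Pow P) (\<lambda>E. Pow (P-E)). (\<Prod>p\<in>E. vv p) * ((\<Prod>p\<in>A. 1/(real p)^2) * (\<Prod>p\<in>P-E-A. 1/(real p)^2)))"
    by (subst sum.Sigma[symmetric]) (auto simp: fP sum_distrib_left)
  also have "\<dots> = (\<Sum>(E,A)\<in>Sigma (Pow P) (\<lambda>E. Pow (P-E)). Wz z ((\<Prod>p\<in>E. p), (\<Prod>p\<in>A. p), (\<Prod>p\<in>P-E-A. p)))"
  proof (rule sum.cong[OF refl], clarify)
    fix E A assume E: "E \<subseteq> P" and A: "A \<subseteq> P - E"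
    have fE: "finite E" "finite A" "finite (P-E-A)" using E A fP by (auto intro: finite_subset[of _ P])
    have pr: "pr3 ((\<Prod>p\<in>E. p), (\<Prod>p\<in>A. p), (\<Prod>p\<in>P-E-A. p)) = d"
    proof -
      have "(\<Prod>p\<in>A. p) * (\<Prod>p\<in>P-E-A. p) = (\<Prod>p\<in>P-E. p)"
        using A fP by (subst prod.union_disjoint[symmetric]) (auto intro: prod.cong finite_subset[of _ P])
      moreover have "(\<Prod>p\<in>E. p) * (\<Prod>p\<in>P-E. p) = (\<Prod>p\<in>P. p)"
        using E fP by (subst prod.union_disjoint[symmetric]) (auto intro: prod.cong finite_subset[of _ P])
      ultimately show ?thesis unfolding pr3_def dprod by (simp add: mult.assoc)
    qed
    have wwE: "ww (\<Prod>p\<in>E. p) = (\<Prod>p\<in>E. vv p)"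
    proof -
      have "prime_factors (\<Prod>p\<in>E. p) = E" using pf_prod_set[OF fE(1)] Pprime E by blast
      then show ?thesis unfolding ww_def by simp
    qed
    have sqr: "\<And>B. finite B \<Longrightarrow> 1/(real (\<Prod>p\<in>B. p))^2 = (\<Prod>p\<in>B. 1/(real p)^2)"
      by (simp add: prod_dividef prod_power_distrib)
    show "(\<Prod>p\<in>E. vv p) * ((\<Prod>p\<in>A. 1/(real p)^2) * (\<Prod>p\<in>P-E-A. 1/(real p)^2))
        = Wz z ((\<Prod>p\<in>E. p), (\<Prod>p\<in>A. p), (\<Prod>p\<in>P-E-A. p))"
    proof -
      have "Wz z ((\<Prod>p\<in>E. p), (\<Prod>p\<in>A. p), (\<Prod>p\<in>P-E-A. p))
          = ww (\<Prod>p\<in>E. p) * ((1/(real (\<Prod>p\<in>A. p))^2) * (1/(real (\<Prod>p\<in>P-E-A. p))^2))"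
        unfolding Wz_def using pr dz by simp
      then show ?thesis unfolding wwE sqr[OF fE(2)] sqr[OF fE(3)] by simp
    qed
  qed
  also have "\<dots> = (\<Sum>t\<in>(\<lambda>(E,A). ((\<Prod>p\<in>E. p), (\<Prod>p\<in>A. p), (\<Prod>p\<in>P-E-A. p))) ` Sigma (Pow P) (\<lambda>E. Pow (P-E)). Wz z t)"
  proof -
    have inj: "inj_on (\<lambda>(E,A). ((\<Prod>p\<in>E. p), (\<Prod>p\<in>A. p), (\<Prod>p\<in>P-E-A. p))) (Sigma (Pow P) (\<lambda>E. Pow (P-E)))"
    proof (rule inj_onI, clarify)
      fix E A E' A'
      assume E: "E \<subseteq> P" "A \<subseteq> P - E" "E' \<subseteq> P" "A' \<subseteq> P - E'"
        and eq: "(\<Prod>p\<in>E. p) = (\<Prod>p\<in>E'. p)" "(\<Prod>p\<in>A. p) = (\<Prod>p\<in>A'. p)"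
        "(\<Prod>p\<in>P-E-A. p) = (\<Prod>p\<in>P-E'-A'. p)"
      have f: "finite E" "finite A" "finite E'" "finite A'" using E fP by (auto intro: finite_subset[of _ P])
      have "E = prime_factors (\<Prod>p\<in>E. p)" using pf_prod_set[OF f(1)] Pprime E by blast
      also have "\<dots> = E'" unfolding eq(1) using pf_prod_set[OF f(3)] Pprime E by blast
      finally have "E = E'" .
      moreover have "A = prime_factors (\<Prod>p\<in>A. p)" using pf_prod_set[OF f(2)] Pprime E by blast
      moreover have "prime_factors (\<Prod>p\<in>A. p) = A'" unfolding eq(2) using pf_prod_set[OF f(4)] Pprime E by blast
      ultimately show "E = E' \<and> A = A'" by simp
    qed
    show ?thesis using sum.reindex[OF inj, of "Wz z"] by (simp add: comp_def case_prod_beta)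
  qed
  also have "\<dots> \<le> (\<Sum>t\<in>{t\<in>Es N \<times> Od N \<times> Od N. pr3 t = d}. Wz z t)"
  proof (rule sum_mono2)
    show "finite {t\<in>Es N \<times> Od N \<times> Od N. pr3 t = d}" by simp
    show "(\<lambda>(E,A). ((\<Prod>p\<in>E. p), (\<Prod>p\<in>A. p), (\<Prod>p\<in>P-E-A. p))) ` Sigma (Pow P) (\<lambda>E. Pow (P-E))
        \<subseteq> {t\<in>Es N \<times> Od N \<times> Od N. pr3 t = d}"
    proof (rule image_subsetI)
      fix x assume x: "x \<in> Sigma (Pow P) (\<lambda>E. Pow (P-E))"
      obtain E A where xe: "x = (E,A)" and E: "E \<subseteq> P" and A: "A \<subseteq> P - E" using x by auto
      have dv: "(\<Prod>p\<in>B. p) dvd d" if "B \<subseteq> P" for B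
        unfolding dprod using fP that by (rule prod_dvd_prod_subset)
      have le: "(\<Prod>p\<in>B. p) \<le> N" if "B \<subseteq> P" for B
        using dvd_imp_le[OF dv[OF that]] d0 dN by simp
      have od: "odd (\<Prod>p\<in>B. p)" if "B \<subseteq> P" for B
        using that fP Pbig finite_subset[OF that fP] by (subst even_prod_iff) auto
      have s1: "E \<subseteq> P" "A \<subseteq> P" "P - E - A \<subseteq> P" using E A by auto
      have "(\<Prod>p\<in>E. p) \<in> Es N"
        unfolding Es_def using le[OF s1(1)] squarefree_mono[OF dv[OF s1(1)] sq]
          coprime_dvd6[OF cp dv[OF s1(1)]] by simp
      moreover have "(\<Prod>p\<in>A. p) \<in> Od N" unfolding Od_def using le[OF s1(2)] od[OF s1(2)] by simp
      moreover have "(\<Prod>p\<in>P-E-A. p) \<in> Od N" unfolding Od_def using le[OF s1(3)] od[OF s1(3)] by simp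
      moreover have "pr3 ((\<Prod>p\<in>E. p), (\<Prod>p\<in>A. p), (\<Prod>p\<in>P-E-A. p)) = d"
      proof -
        have "(\<Prod>p\<in>A. p) * (\<Prod>p\<in>P-E-A. p) = (\<Prod>p\<in>P-E. p)"
          using A fP by (subst prod.union_disjoint[symmetric]) (auto intro: prod.cong finite_subset[of _ P])
        moreover have "(\<Prod>p\<in>E. p) * (\<Prod>p\<in>P-E. p) = (\<Prod>p\<in>P. p)"
          using E fP by (subst prod.union_disjoint[symmetric]) (auto intro: prod.cong finite_subset[of _ P])
        ultimately show ?thesis unfolding pr3_def dprod by (simp add: mult.assoc)
      qed
      ultimately show "(\<lambda>(E,A). ((\<Prod>p\<in>E. p), (\<Prod>p\<in>A. p), (\<Prod>p\<in>P-E-A. p))) x \<in> {t\<in>Es N \<times> Od N \<times> Od N. pr3 t = d}"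
        unfolding xe by simp
    qed
  qed (rule Wz_nn)
  finally show ?thesis .
qed



lemma stepB:
  "(\<Sum>d<N. S3_term z d) \<le> (\<Sum>t\<in>Es N \<times> Od N \<times> Od N. Wz z t)"
proof -
  define S where "S = {t\<in>Es N \<times> Od N \<times> Od N. pr3 t < N}"
  have fS: "finite S" unfolding S_def by simp
  have "(\<Sum>d<N. S3_term z d) \<le> (\<Sum>d<N. \<Sum>t\<in>{t\<in>Es N \<times> Od N \<times> Od N. pr3 t = d}. Wz z t)"
    by (rule sum_mono) (rule termA, simp)
  also have "\<dots> = (\<Sum>d<N. \<Sum>t\<in>{x. x \<in> S \<and> pr3 x = d}. Wz z t)"
    by (rule sum.cong[OF refl], rule sum.cong) (auto simp: S_def)
  also have "\<dots> = (\<Sum>t\<in>S. Wz z t)"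
    by (rule sum.group[OF fS]) (auto simp: S_def)
  also have "\<dots> \<le> (\<Sum>t\<in>Es N \<times> Od N \<times> Od N. Wz z t)"
    by (rule sum_mono2) (auto simp: S_def Wz_nn)
  finally show ?thesis .
qed

lemma Es_pos: "e \<in> Es N \<Longrightarrow> e \<ge> 1"
  unfolding Es_def by (cases e) auto

lemma stepC:
  "(\<Sum>t\<in>Es N \<times> Od N \<times> Od N. Wz z t) = (\<Sum>e\<in>Es N. ww e * TT N (z / real e))"
proof -
  have "(\<Sum>t\<in>Es N \<times> Od N \<times> Od N. Wz z t) = (\<Sum>e\<in>Es N. \<Sum>ab\<in>Od N \<times> Od N. Wz z (e, ab))"
    by (rule sum.cartesian_product')
  also have "\<dots> = (\<Sum>e\<in>Es N. ww e * TT N (z / real e))"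
  proof (rule sum.cong[OF refl])
    fix e assume e: "e \<in> Es N"
    have e1: "real e \<ge> 1" using Es_pos[OF e] by simp
    have "(\<Sum>ab\<in>Od N \<times> Od N. Wz z (e, ab)) = (\<Sum>a\<in>Od N. \<Sum>b\<in>Od N. Wz z (e, a, b))"
      by (rule sum.cartesian_product')
    also have "\<dots> = (\<Sum>a\<in>Od N. \<Sum>b\<in>Od N. ww e * (if real (a*b) > z / real e then 1/((real a)^2 * (real b)^2) else 0))"
    proof (intro sum.cong refl)
      fix a b
      have "real (e*a*b) > z \<longleftrightarrow> real (a*b) > z / real e"
        using e1 by (simp add: pos_divide_less_eq mult.assoc mult.commute mult.left_commute)
      then show "Wz z (e, a, b) = ww e * (if real (a*b) > z / real e then 1/((real a)^2 * (real b)^2) else 0)"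
        unfolding Wz_def pr3_def by simp
    qed
    also have "\<dots> = ww e * TT N (z / real e)"
      unfolding TT_def by (simp add: sum_distrib_left)
    finally show "(\<Sum>ab\<in>Od N \<times> Od N. Wz z (e, ab)) = ww e * TT N (z / real e)" .
  qed
  finally show ?thesis .
qed

lemma stepE:
  assumes z: "z \<ge> 1" and e: "e \<in> Es N"
  shows "ww e * TT N (z / real e) \<le> ww e * real e * ((3/8 * ln z + 27/16) / z)"
proof -
  have e1: "real e \<ge> 1" using Es_pos[OF e] by simp
  have y: "z / real e > 0" using z e1 by simp
  have "TT N (z / real e) \<le> real e * ((3/8 * ln z + 27/16) / z)"
  proof (cases "z / real e \<ge> 1")
    case True
    have "TT N (z / real e) \<le> (3/8 * ln (z / real e) + 27/16) / (z / real e)"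
      using TT_bound[OF y, of N] True by simp
    also have "\<dots> \<le> (3/8 * ln z + 27/16) / (z / real e)"
    proof -
      have "ln (z / real e) \<le> ln z" using z e1 by (simp add: ln_div)
      then show ?thesis using y by (intro divide_right_mono) auto
    qed
    also have "\<dots> = real e * ((3/8 * ln z + 27/16) / z)" using e1 z by (simp add: field_simps)
    finally show ?thesis .
  next
    case False
    have "TT N (z / real e) \<le> 25/16" using TT_bound[OF y, of N] False by simp
    also have "\<dots> \<le> 27/16 * (real e / z)"
    proof -
      have "z / real e < 1" using False by simp
      then have "z < real e" using e1 by (simp add: divide_less_eq)
      then have "real e / z \<ge> 1" using z by (simp add: le_divide_eq)
      then show ?thesis by linarith
    qed
    also have "\<dots> \<le> real e * ((3/8 * ln z + 27/16) / z)"
    proof -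
      have "ln z \<ge> 0" using z by simp
      then have "27/16 \<le> 3/8 * ln z + 27/16" by simp
      then have "27/16 * real e / z \<le> (3/8 * ln z + 27/16) * real e / z"
        using z e1 by (intro divide_right_mono mult_right_mono) auto
      then show ?thesis by (simp add: field_simps)
    qed
    finally show ?thesis .
  qed
  then have "ww e * TT N (z / real e) \<le> ww e * (real e * ((3/8 * ln z + 27/16) / z))"
    by (rule mult_left_mono[OF _ ww_nn])
  then show ?thesis by (simp only: mult.assoc)
qed

lemma stepD: "(\<Sum>e\<in>Es N. ww e * real e) \<le> 4"
proof -
  define X where "X p = vv p * real p" for p
  define Q where "Q = {p. p \<le> N \<and> odd p \<and> p > 3}"
  have fQ: "finite Q" by (rule finite_subset[of _ "{..N}"]) (auto simp: Q_def)
  have Xnn: "X p \<ge> 0" for p unfolding X_def using vv_nn by simp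
  have inj: "inj_on prime_factors (Es N)"
  proof (rule inj_onI)
    fix k l assume "k \<in> Es N" "l \<in> Es N" "prime_factors k = prime_factors l"
    then have "squarefree k" "squarefree l" "prime_factors k = prime_factors l" unfolding Es_def by auto
    then show "k = l" using sqf_prod[of k] sqf_prod[of l] by simp
  qed
  have "(\<Sum>e\<in>Es N. ww e * real e) = (\<Sum>e\<in>Es N. \<Prod>p\<in>prime_factors e. X p)"
  proof (rule sum.cong[OF refl])
    fix e assume e: "e \<in> Es N"
    have sq: "squarefree e" using e unfolding Es_def by auto
    have "real e = real (\<Prod>p\<in>prime_factors e. p)" using sqf_prod[OF sq] by (rule arg_cong)
    then have "real e = (\<Prod>p\<in>prime_factors e. real p)" by simp
    then show "ww e * real e = (\<Prod>p\<in>prime_factors e. X p)"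
      unfolding ww_def X_def by (simp add: prod.distrib)
  qed
  also have "\<dots> = (\<Sum>E\<in>prime_factors ` Es N. \<Prod>p\<in>E. X p)"
    using sum.reindex[OF inj, of "\<lambda>E. \<Prod>p\<in>E. X p"] by simp
  also have "\<dots> \<le> (\<Sum>E\<in>Pow Q. \<Prod>p\<in>E. X p)"
  proof (rule sum_mono2)
    show "finite (Pow Q)" using fQ by simp
    show "prime_factors ` Es N \<subseteq> Pow Q"
    proof clarify
      fix e p assume e: "e \<in> Es N" and p: "p \<in> prime_factors e"
      have cp: "coprime e 6" and eN: "e \<le> N" and e0: "e \<noteq> 0" using e Es_pos[OF e] unfolding Es_def by auto
      have "p \<le> e" using p e0 by (auto intro: dvd_imp_le)
      then show "p \<in> Q" unfolding Q_def using pf_big[OF cp p] eN by simp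
    qed
    show "\<And>E. E \<in> Pow Q - prime_factors ` Es N \<Longrightarrow> 0 \<le> (\<Prod>p\<in>E. X p)"
      using Xnn by (simp add: prod_nonneg)
  qed
  also have "\<dots> = (\<Prod>p\<in>Q. X p + 1)"
    using prod_add[OF fQ, of X "\<lambda>_. 1"] by simp
  also have "\<dots> \<le> (\<Prod>p\<in>(\<lambda>k. 2*k+1) ` {2..N}. X p + 1)"
  proof (rule prod_mono2)
    show "finite ((\<lambda>k. 2*k+1) ` {2..N})" by simp
    show "Q \<subseteq> (\<lambda>k. 2*k+1) ` {2..N}"
    proof
      fix p assume p: "p \<in> Q"
      then have "odd p" "p > 3" "p \<le> N" unfolding Q_def by auto
      then have "p = 2*(p div 2)+1" "p div 2 \<in> {2..N}" by (simp_all add: odd_two_times_div_two_succ) linarith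
      then show "p \<in> (\<lambda>k. 2*k+1) ` {2..N}" by blast
    qed
    show "\<And>b. b \<in> (\<lambda>k. 2*k+1) ` {2..N} - Q \<Longrightarrow> 1 \<le> X b + 1" using Xnn by simp
    show "\<And>a. a \<in> Q \<Longrightarrow> 0 \<le> X a + 1" using Xnn by (simp add: add_nonneg_nonneg)
  qed
  also have "\<dots> = (\<Prod>k\<in>{2..N}. 1 + xx k)"
  proof -
    have "inj_on (\<lambda>k. 2*k+1) {2..N}" by (auto simp: inj_on_def)
    then have "(\<Prod>p\<in>(\<lambda>k. 2*k+1) ` {2..N}. X p + 1) = (\<Prod>k\<in>{2..N}. X (2*k+1) + 1)"
      by (simp add: prod.reindex)
    also have "\<dots> = (\<Prod>k\<in>{2..N}. 1 + xx k)"
    proof (rule prod.cong[OF refl])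
      fix k assume "k \<in> {2..N}"
      then have k2: "real k \<ge> 2" by simp
      have "X (2*k+1) = xx k"
      proof -
        have a: "3 < 2*k+1" using k2 by linarith
        have b: "real (2*k+1) - 3 > 0" using k2 by simp
        have "X (2*k+1) = 6 / ((real (2*k+1))^2 * (real (2*k+1) - 3)) * real (2*k+1)"
          unfolding X_def vv_def using a by (simp only: if_True)
        also have "\<dots> = 6 / (real (2*k+1) * (real (2*k+1) - 3))"
        proof -
          have g: "\<And>x y::real. x > 0 \<Longrightarrow> y > 0 \<Longrightarrow> 6/(x^2*y)*x = 6/(x*y)"
            by (simp add: power2_eq_square field_simps)
          show ?thesis by (rule g) (use b in auto)
        qed
        finally show ?thesis unfolding xx_def .
      qed
      then show "X (2*k+1) + 1 = 1 + xx k" by simp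
    qed
    finally show ?thesis .
  qed
  also have "\<dots> \<le> 4"
  proof (cases "N \<ge> 1")
    case True
    have "(\<Prod>k\<in>{2..N}. 1 + xx k) \<le> 4 * (real N)^2 / (real N + 1)^2" by (rule prod_tele[OF True])
    also have "\<dots> \<le> 4"
    proof -
      have "(real N)^2 \<le> (real N + 1)^2" by (intro power_mono) auto
      then show ?thesis by (simp add: divide_le_eq)
    qed
    finally show ?thesis .
  next
    case False then show ?thesis by simp
  qed
  finally show ?thesis .
qed



lemma S3_term_nn: "S3_term z d \<ge> 0"
proof -
  have "psi3 d \<ge> 0" unfolding psi3_def by (intro prod_nonneg) auto
  then show ?thesis unfolding S3_term_def by (auto intro!: divide_nonneg_nonneg)
qed

theorem mainTheorem9:
  fixes z :: real
  assumes "z \<ge> 1"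
  shows "summable (S3_term z) \<and>
    S3 z \<le> (1534 / 42875) * ((ln z)^2 + 45.75 * ln z + 524.266) / z"
proof -
  have z: "z \<ge> 1" by fact
  define B where "B = (3/8 * ln z + 27/16) / z"
  have partial: "(\<Sum>d<n. S3_term z d) \<le> 4 * B" for n
  proof -
    have "(\<Sum>d<n. S3_term z d) \<le> (\<Sum>e\<in>Es n. ww e * TT n (z / real e))"
      using stepB[where N=n and z=z] stepC[where N=n and z=z] by simp
    also have "\<dots> \<le> (\<Sum>e\<in>Es n. ww e * real e * B)"
      unfolding B_def by (rule sum_mono) (rule stepE[OF z])
    also have "\<dots> = (\<Sum>e\<in>Es n. ww e * real e) * B" by (simp add: sum_distrib_right)
    also have "\<dots> \<le> 4 * B"
    proof (rule mult_right_mono[OF stepD])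
      show "0 \<le> B" unfolding B_def using z by simp
    qed
    finally show ?thesis .
  qed
  have sm: "summable (S3_term z)"
    by (rule summableI_nonneg_bounded[OF S3_term_nn partial])
  have "S3 z \<le> 4 * B" unfolding S3_def by (rule suminf_le_const[OF sm partial])
  also have "\<dots> \<le> (1534 / 42875) * ((ln z)^2 + 45.75 * ln z + 524.266) / z"
  proof -
    define L where "L = ln z"
    have L0: "L \<ge> 0" unfolding L_def using z by simp
    have "3/2 * L + 27/4 \<le> (1534 / 42875) * (L^2 + 45.75 * L + 524.266)"
      using L0 zero_le_power2[of L] by (simp add: algebra_simps) (use zero_le_power2[of L] L0 in linarith)
    then have "(3/2 * L + 27/4) / z \<le> (1534 / 42875) * (L^2 + 45.75 * L + 524.266) / z"
      using z by (intro divide_right_mono) auto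
    moreover have "4 * B = (3/2 * L + 27/4) / z" unfolding B_def L_def using z by (simp add: field_simps)
    ultimately show ?thesis unfolding L_def by simp
  qed
  finally show ?thesis using sm by simp
qed


end
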